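(* For every positive integer $k$, $R_{3,\dots,3}(W_3^{\otimes k})\leq(2+k)2^{k-1}$, where $W_3^{\otimes k}$ is viewed in $S^3\mathbb{C}^2\otimes\cdots\otimes S^3\mathbb{C}^2$ ($k$ factors).
   Context: Identify $S^3\mathbb{C}^2$ with binary cubic forms in a basis $\{x,y\}$; $W_3=x^2y$ (equivalently $y\otimes x\otimes x+x\otimes y\otimes x+x\otimes x\otimes y$). The partially symmetric rank $R_{d_1,\dots,d_k}(T)$ is the minimal $r$ such that $T=\sum_{i=1}^r v_{i,1}^{\otimes d_1}\otimes\cdots\otimes v_{i,k}^{\otimes d_k}$ with $v_{i,j}\in\mathbb{C}^2$. *)

theory Defs
  imports Complex_Main
begin

text \<open>Vectors in C^2 are functions bool => complex (False ~ coordinate of x, True ~ coordinate of y).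
A tensor in (C^2)^{d_0} x ... x (C^2)^{d_(k-1)} (tensor factors grouped into k blocks, block j
having d j factors) is given by its coordinates: a function from multi-indices
f :: nat => nat => bool (f j l = index of the l-th factor of block j) to complex numbers.
Only valid multi-indices (j < k, l < d j; all other values fixed to False) are relevant.\<close>

definition valid_idx :: "nat \<Rightarrow> (nat \<Rightarrow> nat) \<Rightarrow> (nat \<Rightarrow> nat \<Rightarrow> bool) \<Rightarrow> bool" where
  "valid_idx k d f \<longleftrightarrow> (\<forall>j l. (k \<le> j \<or> d j \<le> l) \<longrightarrow> \<not> f j l)"

definition ps_decomp :: "nat \<Rightarrow> (nat \<Rightarrow> nat) \<Rightarrow> ((nat \<Rightarrow> nat \<Rightarrow> bool) \<Rightarrow> complex) \<Rightarrow> nat \<Rightarrow> bool" where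
  "ps_decomp k d T r \<longleftrightarrow>
     (\<exists>v :: nat \<Rightarrow> nat \<Rightarrow> bool \<Rightarrow> complex.
        \<forall>f. valid_idx k d f \<longrightarrow>
          T f = (\<Sum>i<r. \<Prod>j<k. \<Prod>l<d j. v i j (f j l)))"

definition ps_rank :: "nat \<Rightarrow> (nat \<Rightarrow> nat) \<Rightarrow> ((nat \<Rightarrow> nat \<Rightarrow> bool) \<Rightarrow> complex) \<Rightarrow> nat" where
  "ps_rank k d T = (LEAST r. ps_decomp k d T r)"

text \<open>W_3 = y x x + x y x + x x y in (C^2)^{\<otimes>3}: coordinate 1 iff exactly one index is y (True).\<close>
definition W3_coord :: "(nat \<Rightarrow> bool) \<Rightarrow> complex" where
  "W3_coord g = (if card {l. l < 3 \<and> g l} = 1 then 1 else 0)"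

definition W3_pow :: "nat \<Rightarrow> (nat \<Rightarrow> nat \<Rightarrow> bool) \<Rightarrow> complex" where
  "W3_pow k f = (\<Prod>j<k. W3_coord (f j))"

end

theory Submission
  imports Defs "HOL-Library.FuncSet" "HOL-Computational_Algebra.Polynomial"
begin

lemma cube_root_ex: "\<exists>u::complex. u ^ 3 = c"
proof -
  have "(rcis (root 3 (cmod c)) (Arg c / 3)) ^ 3 = c"
    by (simp add: DeMoivre2 rcis_cmod_Arg)
  then show ?thesis by blast
qed

definition cube :: "(bool \<Rightarrow> complex) \<Rightarrow> (nat \<Rightarrow> bool) \<Rightarrow> complex" where
  "cube a g = (\<Prod>l<3. a (g l))"

lemma decomp_from_sum:
  fixes I :: "'i set" and c :: "'i \<Rightarrow> complex" and V :: "'i \<Rightarrow> nat \<Rightarrow> bool \<Rightarrow> complex"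
  assumes fin: "finite I" and k: "1 \<le> k" and cardI: "card I \<le> N"
    and T: "\<And>f. valid_idx k (\<lambda>_. 3) f \<Longrightarrow> T f = (\<Sum>x\<in>I. c x * (\<Prod>j<k. cube (V x j) (f j)))"
  shows "ps_rank k (\<lambda>_. 3) T \<le> N"
proof -
  define u where "u x = (SOME z. z ^ 3 = c x)" for x
  have u: "u x ^ 3 = c x" for x unfolding u_def by (rule someI_ex[OF cube_root_ex])
  obtain g where g: "bij_betw g {0..<card I} I" using ex_bij_betw_nat_finite[OF fin] by blast
  define v where "v i j b = (if i < card I then (if j = 0 then u (g i) * V (g i) 0 b else V (g i) j b) else 0)"
    for i j b
  have k0: "0 \<in> {..<k}" using k by auto
  have trm: "(\<Prod>j<k. \<Prod>l<3. v i j (f j l)) = (if i < card I then c (g i) * (\<Prod>j<k. cube (V (g i) j) (f j)) else 0)"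
    for i f
  proof (cases "i < card I")
    case True
    have "(\<Prod>j<k. \<Prod>l<3. v i j (f j l)) = (\<Prod>l<3. v i 0 (f 0 l)) * (\<Prod>j\<in>{..<k}-{0}. \<Prod>l<3. v i j (f j l))"
      using k0 by (simp add: prod.remove)
    also have "\<dots> = (u (g i) ^ 3 * cube (V (g i) 0) (f 0)) * (\<Prod>j\<in>{..<k}-{0}. cube (V (g i) j) (f j))"
      using True by (simp add: v_def cube_def prod.distrib)
    also have "\<dots> = c (g i) * (cube (V (g i) 0) (f 0) * (\<Prod>j\<in>{..<k}-{0}. cube (V (g i) j) (f j)))"
      by (simp add: u)
    also have "\<dots> = c (g i) * (\<Prod>j<k. cube (V (g i) j) (f j))"
      using k0 by (simp add: prod.remove)
    finally show ?thesis using True by simp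
  next
    case False
    have "(\<Prod>j<k. \<Prod>l<3. v i j (f j l)) = 0"
      using k0 False by (intro prod_zero) (auto simp: v_def intro!: bexI[of _ 0])
    then show ?thesis using False by simp
  qed
  have "ps_decomp k (\<lambda>_. 3) T N"
    unfolding ps_decomp_def
  proof (intro exI allI impI)
    fix f assume vf: "valid_idx k (\<lambda>_. 3) f"
    have "(\<Sum>i<N. \<Prod>j<k. \<Prod>l<(\<lambda>_. 3) j. v i j (f j l))
        = (\<Sum>i<N. if i < card I then c (g i) * (\<Prod>j<k. cube (V (g i) j) (f j)) else 0)"
      by (simp add: trm)
    also have "\<dots> = (\<Sum>i\<in>{0..<card I}. c (g i) * (\<Prod>j<k. cube (V (g i) j) (f j)))"
    proof -
      have e: "{i\<in>{..<N}. i < card I} = {0..<card I}" using cardI by auto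
      show ?thesis by (simp only: sum.inter_filter[symmetric] finite_lessThan e)
    qed
    also have "\<dots> = (\<Sum>x\<in>I. c x * (\<Prod>j<k. cube (V x j) (f j)))"
      by (rule sum.reindex_bij_betw[OF g])
    finally show "T f = (\<Sum>i<N. \<Prod>j<k. \<Prod>l<(\<lambda>_. 3) j. v i j (f j l))"
      using T[OF vf] by simp
  qed
  then show ?thesis unfolding ps_rank_def by (rule Least_le)
qed

lemma lagrange_sum:
  fixes t :: "nat \<Rightarrow> complex"
  assumes fin: "finite S" and ne: "S \<noteq> {}" and inj: "inj_on t S"
  shows "(\<Sum>j\<in>S. \<Prod>i\<in>S-{j}. (x - t i) / (t j - t i)) = 1"
proof -
  define L where "L y = (\<Sum>j\<in>S. \<Prod>i\<in>S-{j}. (y - t i) / (t j - t i))" for y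
  define P where "P = (\<Sum>j\<in>S. smult (\<Prod>i\<in>S-{j}. 1 / (t j - t i)) (\<Prod>i\<in>S-{j}. [:- t i, 1:]))"
  have evalP: "poly P y = L y" for y
    unfolding P_def L_def poly_sum
    by (intro sum.cong refl) (simp add: poly_prod prod.distrib[symmetric])
  have degP: "degree P \<le> card S - 1"
    unfolding P_def
  proof (intro degree_sum_le[OF fin] ballI)
    fix j assume j: "j \<in> S"
    have "degree (smult (\<Prod>i\<in>S-{j}. 1 / (t j - t i)) (\<Prod>i\<in>S-{j}. [:- t i, 1:]))
        \<le> degree (\<Prod>i\<in>S-{j}. [:- t i, 1:])" by (rule degree_smult_le)
    also have "\<dots> \<le> sum (degree \<circ> (\<lambda>i. [:- t i, 1:])) (S-{j})"
      using fin by (intro degree_prod_sum_le) auto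
    also have "\<dots> = card S - 1" using fin j by simp
    finally show "degree (smult (\<Prod>i\<in>S-{j}. 1 / (t j - t i)) (\<Prod>i\<in>S-{j}. [:- t i, 1:])) \<le> card S - 1" .
  qed
  have roots: "L (t m) = 1" if m: "m \<in> S" for m
  proof -
    have "L (t m) = (\<Prod>i\<in>S-{m}. (t m - t i) / (t m - t i)) + (\<Sum>j\<in>S-{m}. \<Prod>i\<in>S-{j}. (t m - t i) / (t j - t i))"
      unfolding L_def using fin m by (simp add: sum.remove)
    also have "(\<Prod>i\<in>S-{m}. (t m - t i) / (t m - t i)) = 1"
    proof (intro prod.neutral ballI)
      fix i assume "i \<in> S - {m}"
      then have "t m \<noteq> t i" using inj m by (auto dest: inj_onD)
      then show "(t m - t i) / (t m - t i) = 1" by simp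
    qed
    also have "(\<Sum>j\<in>S-{m}. \<Prod>i\<in>S-{j}. (t m - t i) / (t j - t i)) = 0"
    proof (intro sum.neutral ballI)
      fix j assume "j \<in> S - {m}"
      then have "m \<in> S - {j}" using m by auto
      then show "(\<Prod>i\<in>S-{j}. (t m - t i) / (t j - t i)) = 0"
        using fin by (intro prod_zero) (auto intro!: bexI[of _ m])
    qed
    finally show ?thesis by simp
  qed
  have cardS: "card (t ` S) = card S" using inj by (simp add: card_image)
  have "card S > 0" using fin ne by (simp add: card_gt_0_iff)
  have "P = 1"
  proof (rule poly_eqI_degree[where A = "t ` S"])
    show "\<And>y. y \<in> t ` S \<Longrightarrow> poly P y = poly 1 y" using roots evalP by auto
    show "degree P < card (t ` S)" using degP cardS \<open>card S > 0\<close> by linarith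
    show "degree (1::complex poly) < card (t ` S)" using cardS \<open>card S > 0\<close> by simp
  qed
  then have "L x = 1" using evalP[of x] by simp
  then show ?thesis unfolding L_def .
qed

definition tt :: "nat \<Rightarrow> complex" where "tt i = of_nat i + 1"
definition qq :: "nat \<Rightarrow> nat \<Rightarrow> complex" where "qq j i = tt i / (tt i - tt j)"

lemma lag_q:
  assumes "finite S" "S \<noteq> {}"
  shows "(\<Sum>j\<in>S. \<Prod>i\<in>S-{j}. qq j i) = 1"
proof -
  have inj: "inj_on tt S" by (auto simp: inj_on_def tt_def)
  have "(\<Sum>j\<in>S. \<Prod>i\<in>S-{j}. qq j i) = (\<Sum>j\<in>S. \<Prod>i\<in>S-{j}. (0 - tt i) / (tt j - tt i))"
  proof (intro sum.cong prod.cong refl)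
    fix j i show "qq j i = (0 - tt i) / (tt j - tt i)"
      unfolding qq_def by (simp add: divide_simps) (simp add: algebra_simps)
  qed
  also have "\<dots> = 1" by (rule lagrange_sum[OF assms inj])
  finally show ?thesis .
qed

lemma qq_nz: "i \<noteq> j \<Longrightarrow> qq j i \<noteq> 0"
  by (simp add: qq_def tt_def) (metis of_nat_Suc of_nat_neq_0 add.commute)

lemma comb:
  fixes w y :: "nat \<Rightarrow> complex" and q :: "nat \<Rightarrow> nat \<Rightarrow> complex"
  assumes cs: "\<And>j. j < k \<Longrightarrow> (w j = 1 \<and> y j = 0) \<or> (w j = 0 \<and> y j = 1) \<or> (w j = 0 \<and> y j = 0)"
    and lag: "\<And>S. S \<subseteq> {..<k} \<Longrightarrow> S \<noteq> {} \<Longrightarrow> (\<Sum>j\<in>S. \<Prod>i\<in>S-{j}. q j i) = 1"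
  shows "(\<Prod>j<k. w j) = (\<Prod>j<k. w j + y j) - (\<Sum>j<k. y j * (\<Prod>i\<in>{..<k}-{j}. w i + q j i * y i))"
proof (cases "\<exists>j0<k. w j0 = 0 \<and> y j0 = 0")
  case True
  then obtain j0 where j0: "j0 < k" "w j0 = 0" "y j0 = 0" by blast
  have a: "(\<Prod>j<k. w j) = 0" using j0 by (intro prod_zero) auto
  have b: "(\<Prod>j<k. w j + y j) = 0" using j0 by (intro prod_zero) (auto intro!: bexI[of _ j0])
  have c: "(\<Sum>j<k. y j * (\<Prod>i\<in>{..<k}-{j}. w i + q j i * y i)) = 0"
  proof (intro sum.neutral ballI)
    fix j assume j: "j \<in> {..<k}"
    show "y j * (\<Prod>i\<in>{..<k}-{j}. w i + q j i * y i) = 0"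
    proof (cases "j = j0")
      case True then show ?thesis using j0 by simp
    next
      case False
      have "(\<Prod>i\<in>{..<k}-{j}. w i + q j i * y i) = 0"
        using j0 False by (intro prod_zero) (auto intro!: bexI[of _ j0])
      then show ?thesis by simp
    qed
  qed
  show ?thesis by (simp only: a b c diff_zero)
next
  case False
  define S where "S = {j. j < k \<and> y j = 1}"
  have S_sub: "S \<subseteq> {..<k}" by (auto simp: S_def)
  have inS: "j < k \<Longrightarrow> j \<in> S \<Longrightarrow> w j = 0 \<and> y j = 1" for j using cs[of j] by (auto simp: S_def)
  have notS: "j < k \<Longrightarrow> j \<notin> S \<Longrightarrow> w j = 1 \<and> y j = 0" for j using cs[of j] False by (auto simp: S_def)
  have b: "(\<Prod>j<k. w j + y j) = 1"
  proof (intro prod.neutral ballI)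
    fix j assume "j \<in> {..<k}" then show "w j + y j = 1" using inS notS by (cases "j \<in> S") auto
  qed
  have a: "(\<Prod>j<k. w j) = (if S = {} then 1 else 0)"
  proof (cases "S = {}")
    case True
    then show ?thesis using notS by (auto intro!: prod.neutral)
  next
    case False
    then obtain j0 where "j0 \<in> S" by blast
    then show ?thesis using inS S_sub False by (auto intro!: prod_zero bexI[of _ j0])
  qed
  have c: "(\<Sum>j<k. y j * (\<Prod>i\<in>{..<k}-{j}. w i + q j i * y i)) = (\<Sum>j\<in>S. \<Prod>i\<in>S-{j}. q j i)"
  proof -
    have "(\<Sum>j<k. y j * (\<Prod>i\<in>{..<k}-{j}. w i + q j i * y i))
        = (\<Sum>j<k. if j \<in> S then (\<Prod>i\<in>{..<k}-{j}. if i \<in> S then q j i else 1) else 0)"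
    proof (intro sum.cong refl)
      fix j assume j: "j \<in> {..<k}"
      have pr: "(\<Prod>i\<in>{..<k}-{j}. w i + q j i * y i) = (\<Prod>i\<in>{..<k}-{j}. if i \<in> S then q j i else 1)"
      proof (intro prod.cong refl)
        fix i assume "i \<in> {..<k}-{j}"
        then show "w i + q j i * y i = (if i \<in> S then q j i else 1)" using inS notS by auto
      qed
      show "y j * (\<Prod>i\<in>{..<k}-{j}. w i + q j i * y i) = (if j \<in> S then (\<Prod>i\<in>{..<k}-{j}. if i \<in> S then q j i else 1) else 0)"
        using inS notS j pr by auto
    qed
    also have "\<dots> = (\<Sum>j\<in>{j\<in>{..<k}. j \<in> S}. \<Prod>i\<in>{..<k}-{j}. if i \<in> S then q j i else 1)"
      by (rule sum.inter_filter[symmetric]) simp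
    also have "\<dots> = (\<Sum>j\<in>S. \<Prod>i\<in>S-{j}. q j i)"
    proof -
      have e1: "{j\<in>{..<k}. j \<in> S} = S" using S_sub by auto
      have e2: "{i\<in>{..<k}-{j}. i \<in> S} = S - {j}" for j using S_sub by auto
      have e3: "(\<Prod>i\<in>{..<k}-{j}. if i \<in> S then q j i else 1) = (\<Prod>i\<in>S-{j}. q j i)" for j
        by (subst prod.inter_filter[symmetric]) (simp_all only: e2 finite_Diff finite_lessThan)
      show ?thesis by (simp only: e1 e3)
    qed
    finally show ?thesis .
  qed
  show ?thesis
  proof (cases "S = {}")
    case True then show ?thesis using a b c by simp
  next
    case False then show ?thesis using a b c lag[OF S_sub] by simp
  qed
qed

definition nb :: "(nat \<Rightarrow> bool) \<Rightarrow> nat" where "nb g = card {l. l < 3 \<and> g l}"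
definition y3 :: "(nat \<Rightarrow> bool) \<Rightarrow> complex" where "y3 g = (if nb g = 3 then 1 else 0)"
definition sg :: "bool \<Rightarrow> complex" where "sg b = (if b then -1 else 1)"
definition Ve :: "complex \<Rightarrow> complex \<Rightarrow> bool \<Rightarrow> complex" where "Ve e s b = (if b then s * e else 1)"
definition yv :: "bool \<Rightarrow> complex" where "yv b = (if b then 1 else 0)"

lemma three_set: "{l::nat. l < 3 \<and> g l} = (if g 0 then {0} else {}) \<union> (if g 1 then {1} else {}) \<union> (if g 2 then {2} else {})"
proof -
  have h: "(l::nat) < 3 \<longleftrightarrow> l = 0 \<or> l = 1 \<or> l = 2" for l by auto
  have "{l::nat. l < 3 \<and> g l} = {l. (l = 0 \<or> l = 1 \<or> l = 2) \<and> g l}" by (simp only: h)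
  also have "\<dots> = (if g 0 then {0} else {}) \<union> (if g 1 then {1} else {}) \<union> (if g 2 then {2} else {})"
  proof (intro set_eqI)
    fix x :: nat
    show "x \<in> {l::nat. (l = 0 \<or> l = 1 \<or> l = 2) \<and> g l} \<longleftrightarrow> x \<in> (if g 0 then {0} else {}) \<union> (if g 1 then {1} else {}) \<union> (if g 2 then {2} else {})"
      by (cases "x = 0"; cases "x = 1"; cases "x = 2") auto
  qed
  finally show ?thesis .
qed

lemma nb_eq: "nb g = (if g 0 then 1 else 0) + (if g 1 then 1 else 0) + (if g 2 then 1 else 0)"
  unfolding nb_def three_set by (cases "g 0"; cases "g 1"; cases "g 2") auto

lemma cube3: "cube a g = a (g 0) * a (g 1) * a (g 2)"
proof -
  have "{..<3::nat} = {0,1,2}" by auto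
  then show ?thesis by (simp add: cube_def mult.assoc)
qed

lemma W3_nb: "W3_coord g = (if nb g = 1 then 1 else 0)"
  by (simp add: W3_coord_def nb_def)

lemma block_sum:
  assumes e: "e \<noteq> 0"
  shows "(\<Sum>b\<in>UNIV. sg b / (2 * e) * cube (Ve e (sg b)) g) = W3_coord g + e^2 * y3 g"
proof -
  have u: "(UNIV::bool set) = {True, False}" by auto
  show ?thesis
    unfolding u W3_nb y3_def nb_eq
    using e by (cases "g 0"; cases "g 1"; cases "g 2") (simp_all add: cube3 Ve_def sg_def field_simps power2_eq_square)
qed

lemma block_y: "cube yv g = y3 g"
  unfolding y3_def nb_eq cube3 yv_def by (cases "g 0"; cases "g 1"; cases "g 2") simp_all

lemma block_cases: "(W3_coord g = 1 \<and> y3 g = 0) \<or> (W3_coord g = 0 \<and> y3 g = 1) \<or> (W3_coord g = 0 \<and> y3 g = 0)"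
  unfolding W3_nb y3_def by auto

definition ee :: "nat \<Rightarrow> nat \<Rightarrow> complex" where "ee j i = csqrt (qq j i)"

lemma ee_nz: "i \<noteq> j \<Longrightarrow> ee j i \<noteq> 0"
  using qq_nz by (simp add: ee_def)

lemma ee_sq: "ee j i ^ 2 = qq j i"
  by (simp add: ee_def)

lemma sum_None:
  fixes k :: nat and f :: "nat \<Rightarrow> nat \<Rightarrow> bool"
  shows
  "(\<Sum>s\<in>PiE {..<k} (\<lambda>_. UNIV). (\<Prod>j<k. sg (s j) / (2 * 1)) * (\<Prod>j<k. cube (Ve 1 (sg (s j))) (f j)))
   = (\<Prod>j<k. W3_coord (f j) + y3 (f j))"
proof -
  have "(\<Sum>s\<in>PiE {..<k} (\<lambda>_. UNIV). (\<Prod>j<k. sg (s j) / (2 * 1)) * (\<Prod>j<k. cube (Ve 1 (sg (s j))) (f j)))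
      = (\<Sum>s\<in>PiE {..<k} (\<lambda>_. UNIV). \<Prod>j<k. sg (s j) / (2 * 1) * cube (Ve 1 (sg (s j))) (f j))"
    by (simp only: prod.distrib)
  also have "\<dots> = (\<Prod>j<k. \<Sum>b\<in>UNIV. sg b / (2 * 1) * cube (Ve 1 (sg b)) (f j))"
    by (rule prod_sum_PiE[symmetric]) auto
  also have "\<dots> = (\<Prod>j<k. W3_coord (f j) + y3 (f j))"
    using block_sum[of 1] by simp
  finally show ?thesis .
qed

lemma sum_Some:
  fixes k :: nat and f :: "nat \<Rightarrow> nat \<Rightarrow> bool"
  assumes j0: "j0 < k"
  shows "(\<Sum>s\<in>PiE ({..<k}-{j0}) (\<lambda>_. UNIV). (- (\<Prod>i\<in>{..<k}-{j0}. sg (s i) / (2 * ee j0 i))) *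
           (\<Prod>j<k. cube (if j = j0 then yv else Ve (ee j0 j) (sg (s j))) (f j)))
   = - (y3 (f j0) * (\<Prod>i\<in>{..<k}-{j0}. W3_coord (f i) + qq j0 i * y3 (f i)))"
proof -
  have split: "(\<Prod>j<k. cube (if j = j0 then yv else Ve (ee j0 j) (sg (s j))) (f j))
      = y3 (f j0) * (\<Prod>j\<in>{..<k}-{j0}. cube (Ve (ee j0 j) (sg (s j))) (f j))" for s :: "nat \<Rightarrow> bool"
  proof -
    have "(\<Prod>j<k. cube (if j = j0 then yv else Ve (ee j0 j) (sg (s j))) (f j))
        = cube yv (f j0) * (\<Prod>j\<in>{..<k}-{j0}. cube (if j = j0 then yv else Ve (ee j0 j) (sg (s j))) (f j))"
      using j0 by (simp add: prod.remove)
    also have "(\<Prod>j\<in>{..<k}-{j0}. cube (if j = j0 then yv else Ve (ee j0 j) (sg (s j))) (f j))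
        = (\<Prod>j\<in>{..<k}-{j0}. cube (Ve (ee j0 j) (sg (s j))) (f j))"
      by (intro prod.cong refl) auto
    finally show ?thesis by (simp add: block_y)
  qed
  have "(\<Sum>s\<in>PiE ({..<k}-{j0}) (\<lambda>_. UNIV). (- (\<Prod>i\<in>{..<k}-{j0}. sg (s i) / (2 * ee j0 i))) *
           (\<Prod>j<k. cube (if j = j0 then yv else Ve (ee j0 j) (sg (s j))) (f j)))
      = (\<Sum>s\<in>PiE ({..<k}-{j0}) (\<lambda>_. UNIV). - (y3 (f j0) * (\<Prod>i\<in>{..<k}-{j0}. sg (s i) / (2 * ee j0 i) * cube (Ve (ee j0 i) (sg (s i))) (f i))))"
    by (intro sum.cong refl) (simp only: split prod.distrib mult_minus_left mult_minus_right mult_ac)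
  also have "\<dots> = - (y3 (f j0) * (\<Sum>s\<in>PiE ({..<k}-{j0}) (\<lambda>_. UNIV). \<Prod>i\<in>{..<k}-{j0}. sg (s i) / (2 * ee j0 i) * cube (Ve (ee j0 i) (sg (s i))) (f i)))"
    by (simp add: sum_negf sum_distrib_left)
  also have "(\<Sum>s\<in>PiE ({..<k}-{j0}) (\<lambda>_. UNIV). \<Prod>i\<in>{..<k}-{j0}. sg (s i) / (2 * ee j0 i) * cube (Ve (ee j0 i) (sg (s i))) (f i))
      = (\<Prod>i\<in>{..<k}-{j0}. \<Sum>b\<in>UNIV. sg b / (2 * ee j0 i) * cube (Ve (ee j0 i) (sg b)) (f i))"
    by (rule prod_sum_PiE[symmetric]) auto
  also have "\<dots> = (\<Prod>i\<in>{..<k}-{j0}. W3_coord (f i) + qq j0 i * y3 (f i))"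
  proof (intro prod.cong refl)
    fix i assume "i \<in> {..<k}-{j0}"
    then have "ee j0 i \<noteq> 0" using ee_nz by auto
    then have "(\<Sum>b\<in>UNIV. sg b / (2 * ee j0 i) * cube (Ve (ee j0 i) (sg b)) (f i)) = W3_coord (f i) + (ee j0 i)^2 * y3 (f i)"
      by (rule block_sum)
    then show "(\<Sum>b\<in>UNIV. sg b / (2 * ee j0 i) * cube (Ve (ee j0 i) (sg b)) (f i)) = W3_coord (f i) + qq j0 i * y3 (f i)"
      by (simp only: ee_sq)
  qed
  finally show ?thesis .
qed

theorem theorem3p3:
  fixes k :: nat
  assumes "1 \<le> k"
  shows "ps_rank k (\<lambda>_. 3) (W3_pow k) \<le> (2 + k) * 2 ^ (k - 1)"
proof -
  define Os where "Os = insert None (Some ` {..<k})"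
  define B where "B oo = (case oo of None \<Rightarrow> PiE {..<k} (\<lambda>_. UNIV::bool set) | Some j \<Rightarrow> PiE ({..<k}-{j}) (\<lambda>_. UNIV))" for oo
  define I where "I = Sigma Os B"
  define c where "c x = (case x of (None, s) \<Rightarrow> (\<Prod>j<k. sg (s j) / (2 * 1))
      | (Some j0, s) \<Rightarrow> - (\<Prod>i\<in>{..<k}-{j0}. sg (s i) / (2 * ee j0 i)))" for x
  define V where "V x j = (case x of (None, s) \<Rightarrow> Ve 1 (sg (s j))
      | (Some j0, s) \<Rightarrow> (if j = j0 then yv else Ve (ee j0 j) (sg (s j))))" for x j
  have finO: "finite Os" by (simp add: Os_def)
  have finB: "\<And>oo. finite (B oo)" by (auto simp: B_def finite_PiE split: option.splits)
  have finI: "finite I" unfolding I_def using finO finB by auto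
  have NoneO: "None \<notin> Some ` {..<k}" by auto
  have cardI: "card I = (2 + k) * 2 ^ (k - 1)"
  proof -
    have "card I = (\<Sum>oo\<in>Os. card (B oo))" unfolding I_def using finO finB by (simp add: card_SigmaI)
    also have "\<dots> = card (B None) + (\<Sum>j<k. card (B (Some j)))"
      unfolding Os_def using NoneO by (simp add: sum.reindex)
    also have "card (B None) = 2 ^ k" by (simp add: B_def card_PiE)
    also have "(\<Sum>j<k. card (B (Some j))) = k * 2 ^ (k - 1)"
      by (simp add: B_def card_PiE)
    also have "2 ^ k + k * 2 ^ (k - 1) = (2 + k) * 2 ^ (k - 1)"
    proof -
      have "(2::nat) ^ k = 2 * 2 ^ (k - 1)" using assms by (cases k) auto
      then show ?thesis by (simp add: algebra_simps)
    qed
    finally show ?thesis .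
  qed
  show ?thesis
  proof (rule decomp_from_sum[OF finI assms])
    show "card I \<le> (2 + k) * 2 ^ (k - 1)" using cardI by simp
    fix f :: "nat \<Rightarrow> nat \<Rightarrow> bool"
    have "(\<Sum>x\<in>I. c x * (\<Prod>j<k. cube (V x j) (f j))) = (\<Sum>oo\<in>Os. \<Sum>s\<in>B oo. c (oo, s) * (\<Prod>j<k. cube (V (oo, s) j) (f j)))"
      unfolding I_def using finO finB by (simp add: sum.Sigma)
    also have "\<dots> = (\<Sum>s\<in>B None. c (None, s) * (\<Prod>j<k. cube (V (None, s) j) (f j)))
        + (\<Sum>j<k. \<Sum>s\<in>B (Some j). c (Some j, s) * (\<Prod>j'<k. cube (V (Some j, s) j') (f j')))"
      unfolding Os_def using NoneO by (simp add: sum.reindex)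
    also have "(\<Sum>s\<in>B None. c (None, s) * (\<Prod>j<k. cube (V (None, s) j) (f j))) = (\<Prod>j<k. W3_coord (f j) + y3 (f j))"
      unfolding B_def c_def V_def using sum_None by simp
    also have "(\<Sum>j<k. \<Sum>s\<in>B (Some j). c (Some j, s) * (\<Prod>j'<k. cube (V (Some j, s) j') (f j')))
        = (\<Sum>j<k. - (y3 (f j) * (\<Prod>i\<in>{..<k}-{j}. W3_coord (f i) + qq j i * y3 (f i))))"
    proof (intro sum.cong refl)
      fix j assume "j \<in> {..<k}"
      then show "(\<Sum>s\<in>B (Some j). c (Some j, s) * (\<Prod>j'<k. cube (V (Some j, s) j') (f j')))
        = - (y3 (f j) * (\<Prod>i\<in>{..<k}-{j}. W3_coord (f i) + qq j i * y3 (f i)))"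
        unfolding B_def c_def V_def using sum_Some[of j k f] by simp
    qed
    also have "(\<Prod>j<k. W3_coord (f j) + y3 (f j)) + (\<Sum>j<k. - (y3 (f j) * (\<Prod>i\<in>{..<k}-{j}. W3_coord (f i) + qq j i * y3 (f i))))
        = (\<Prod>j<k. W3_coord (f j))"
    proof -
      have eq: "(\<Prod>j<k. W3_coord (f j)) = (\<Prod>j<k. W3_coord (f j) + y3 (f j)) - (\<Sum>j<k. y3 (f j) * (\<Prod>i\<in>{..<k}-{j}. W3_coord (f i) + qq j i * y3 (f i)))"
      proof (rule comb)
        show "\<And>j. j < k \<Longrightarrow> (W3_coord (f j) = 1 \<and> y3 (f j) = 0) \<or> (W3_coord (f j) = 0 \<and> y3 (f j) = 1) \<or> (W3_coord (f j) = 0 \<and> y3 (f j) = 0)"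
          by (rule block_cases)
        show "\<And>S. S \<subseteq> {..<k} \<Longrightarrow> S \<noteq> {} \<Longrightarrow> (\<Sum>j\<in>S. \<Prod>i\<in>S-{j}. qq j i) = 1"
          using lag_q finite_subset by blast
      qed
      show ?thesis by (simp only: eq sum_negf) simp
    qed
    finally show "W3_pow k f = (\<Sum>x\<in>I. c x * (\<Prod>j<k. cube (V x j) (f j)))"
      by (simp add: W3_pow_def)
  qed
qed

end
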